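(* Let $P$ be a positive event pattern, $I$ an event stream, $G=(V,\mathcal{E})$ the GRETA graph of $P$ and $I$, $E$ an event type, and suppose every event of type $E$ carries a real-valued attribute $attr$. For $e \in V$ let $Pr(e)=\{p\in V:(p,e)\in\mathcal{E}\}$, let $End=\{e \in V : e.type = end(P)\}$, and let $e.count$ be defined recursively in increasing time order by $e.count = [e.type=start(P)] + \sum_{p\in Pr(e)} p.count$. Define recursively in increasing time order, for $e \in V$: if $e.type = E$: $e.count_E = e.count + \sum_{p\in Pr(e)} p.count_E$, $e.min = \min(\{e.attr\}\cup\{p.min : p\in Pr(e)\})$, $e.max = \max(\{e.attr\}\cup\{p.max : p\in Pr(e)\})$, $e.sum = e.attr\cdot e.count + \sum_{p\in Pr(e)} p.sum$; if $e.type \neq E$: $e.count_E = \sum_{p\in Pr(e)} p.count_E$, $e.min = \min_{p\in Pr(e)} p.min$, $e.max = \max_{p\in Pr(e)} p.max$, $e.sum = \sum_{p\in Pr(e)} p.sum$ (with $\min\emptyset = +\infty$, $\max\emptyset=-\infty$, empty sums $=0$). Then $\mathsf{COUNT}(E) = \sum_{e\in End} e.count_E$, $\mathsf{MIN}(E.attr) = \min_{e\in End} e.min$, $\mathsf{MAX}(E.attr) = \max_{e\in End} e.max$, $\mathsf{SUM}(E.attr) = \sum_{e\in End} e.sum$, and $\mathsf{AVG}(E.attr) = \mathsf{SUM}(E.attr)/\mathsf{COUNT}(E)$.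
   Context: Events: each event $e$ has an event type $e.type$ and an occurrence time $e.time \in \mathbb{Q}_{\ge 0}$. An event stream $I$ is a finite collection of distinct events arriving in nondecreasing order of time. Positive patterns: an event type $E$ is a pattern; if $P_i,P_j$ are patterns then $P_i+$ and $\mathsf{SEQ}(P_i,P_j)$ are patterns; each event type occurs at most once in a pattern. Matches over $I$: $matches(E)=\{(e): e\in I, e.type=E\}$; $(e_1,\dots,e_k)\in matches(\mathsf{SEQ}(P_i,P_j))$ iff for some $1\le m\le k$, $(e_1,\dots,e_m)\in matches(P_i)$, $(e_{m+1},\dots,e_k)\in matches(P_j)$ and $e_1.time<\dots<e_k.time$; $matches(P_i+)$ consists of concatenations $s_1\cdots s_k$ ($k\ge1$) with each $s_l\in matches(P_i)$ and the last event of $s_l$ strictly earlier than the first event of $s_{l+1}$. Trends matched by $P$ in $I$ are the elements of $matches(P)$. Define $start(E)=end(E)=E$, $start(P_i+)=start(P_i)$, $end(P_i+)=end(P_i)$, $start(\mathsf{SEQ}(P_i,P_j))=start(P_i)$, $end(\mathsf{SEQ}(P_i,P_j))=end(P_j)$. The GRETA graph $G=(V,\mathcal{E})$ has as vertices the events of $I$ occurring in at least one trend matched by $P$ in $I$, and an edge $(e_i,e_j)$ iff $e_i,e_j$ are consecutive events, in this order, in some trend matched by $P$ in $I$. Aggregates over all trends matched by $P$ in $I$: $\mathsf{COUNT}(E)$ is the total number of occurrences of events of type $E$ in all trends (summed over trends); $\mathsf{MIN}(E.attr)$ ($\mathsf{MAX}(E.attr)$) is the minimum (maximum) of $attr$ over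 all events of type $E$ in all trends; $\mathsf{SUM}(E.attr)$ is the sum, over all trends and all events of type $E$ in each trend, of $attr$; $\mathsf{AVG}(E.attr)=\mathsf{SUM}(E.attr)/\mathsf{COUNT}(E)$. *)

theory Defs
  imports Complex_Main "HOL-Library.Extended_Real"
begin

(* Events are elements of an abstract type 'e, with an event type ety :: 'e => 't
   and an occurrence time tm :: 'e => rat.  An event stream is a finite set of events. *)

datatype 't pat = Ev 't | Plus "'t pat" | SEQ "'t pat" "'t pat"

fun pat_types :: "'t pat \<Rightarrow> 't list" where
  "pat_types (Ev E) = [E]"
| "pat_types (Plus P) = pat_types P"
| "pat_types (SEQ P Q) = pat_types P @ pat_types Q"

definition wf_pat :: "'t pat \<Rightarrow> bool" where
  "wf_pat P \<longleftrightarrow> distinct (pat_types P)"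

fun pstart :: "'t pat \<Rightarrow> 't" where
  "pstart (Ev E) = E"
| "pstart (Plus P) = pstart P"
| "pstart (SEQ P Q) = pstart P"

fun pend :: "'t pat \<Rightarrow> 't" where
  "pend (Ev E) = E"
| "pend (Plus P) = pend P"
| "pend (SEQ P Q) = pend Q"

inductive_set plus_matches :: "('e \<Rightarrow> rat) \<Rightarrow> 'e list set \<Rightarrow> 'e list set"
  for tm :: "'e \<Rightarrow> rat" and M :: "'e list set" where
  single: "s \<in> M \<Longrightarrow> s \<in> plus_matches tm M"
| cons: "s \<in> M \<Longrightarrow> r \<in> plus_matches tm M \<Longrightarrow> s \<noteq> [] \<Longrightarrow> r \<noteq> []
          \<Longrightarrow> tm (last s) < tm (hd r) \<Longrightarrow> s @ r \<in> plus_matches tm M"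

fun matches :: "('e \<Rightarrow> 't) \<Rightarrow> ('e \<Rightarrow> rat) \<Rightarrow> 'e set \<Rightarrow> 't pat \<Rightarrow> 'e list set" where
  "matches ety tm I (Ev E) = {[e] | e. e \<in> I \<and> ety e = E}"
| "matches ety tm I (SEQ P Q) =
     {xs @ ys | xs ys. xs \<in> matches ety tm I P \<and> ys \<in> matches ety tm I Q \<and> xs \<noteq> [] \<and> ys \<noteq> []
        \<and> sorted_wrt (<) (map tm (xs @ ys))}"
| "matches ety tm I (Plus P) = plus_matches tm (matches ety tm I P)"

definition greta_V :: "('e \<Rightarrow> 't) \<Rightarrow> ('e \<Rightarrow> rat) \<Rightarrow> 'e set \<Rightarrow> 't pat \<Rightarrow> 'e set" where
  "greta_V ety tm I P = {e. \<exists>t \<in> matches ety tm I P. e \<in> set t}"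

definition greta_E :: "('e \<Rightarrow> 't) \<Rightarrow> ('e \<Rightarrow> rat) \<Rightarrow> 'e set \<Rightarrow> 't pat \<Rightarrow> ('e \<times> 'e) set" where
  "greta_E ety tm I P = {(a, b). \<exists>t \<in> matches ety tm I P. \<exists>i. Suc i < length t \<and> t ! i = a \<and> t ! Suc i = b}"

definition preds :: "('e \<Rightarrow> 't) \<Rightarrow> ('e \<Rightarrow> rat) \<Rightarrow> 'e set \<Rightarrow> 't pat \<Rightarrow> 'e \<Rightarrow> 'e set" where
  "preds ety tm I P e = {p \<in> greta_V ety tm I P. (p, e) \<in> greta_E ety tm I P}"

definition end_events :: "('e \<Rightarrow> 't) \<Rightarrow> ('e \<Rightarrow> rat) \<Rightarrow> 'e set \<Rightarrow> 't pat \<Rightarrow> 'e set" where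
  "end_events ety tm I P = {e \<in> greta_V ety tm I P. ety e = pend P}"

definition COUNT :: "('e \<Rightarrow> 't) \<Rightarrow> ('e \<Rightarrow> rat) \<Rightarrow> 'e set \<Rightarrow> 't pat \<Rightarrow> 't \<Rightarrow> nat" where
  "COUNT ety tm I P E = (\<Sum>t \<in> matches ety tm I P. length (filter (\<lambda>e. ety e = E) t))"

definition MINagg :: "('e \<Rightarrow> 't) \<Rightarrow> ('e \<Rightarrow> rat) \<Rightarrow> 'e set \<Rightarrow> 't pat \<Rightarrow> 't \<Rightarrow> ('e \<Rightarrow> real) \<Rightarrow> ereal" where
  "MINagg ety tm I P E attr =
     Inf {ereal (attr e) | e t. t \<in> matches ety tm I P \<and> e \<in> set t \<and> ety e = E}"

definition MAXagg :: "('e \<Rightarrow> 't) \<Rightarrow> ('e \<Rightarrow> rat) \<Rightarrow> 'e set \<Rightarrow> 't pat \<Rightarrow> 't \<Rightarrow> ('e \<Rightarrow> real) \<Rightarrow> ereal" where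
  "MAXagg ety tm I P E attr =
     Sup {ereal (attr e) | e t. t \<in> matches ety tm I P \<and> e \<in> set t \<and> ety e = E}"

definition SUMagg :: "('e \<Rightarrow> 't) \<Rightarrow> ('e \<Rightarrow> rat) \<Rightarrow> 'e set \<Rightarrow> 't pat \<Rightarrow> 't \<Rightarrow> ('e \<Rightarrow> real) \<Rightarrow> real" where
  "SUMagg ety tm I P E attr =
     (\<Sum>t \<in> matches ety tm I P. \<Sum>e \<leftarrow> filter (\<lambda>e. ety e = E) t. attr e)"

definition AVGagg :: "('e \<Rightarrow> 't) \<Rightarrow> ('e \<Rightarrow> rat) \<Rightarrow> 'e set \<Rightarrow> 't pat \<Rightarrow> 't \<Rightarrow> ('e \<Rightarrow> real) \<Rightarrow> real" where
  "AVGagg ety tm I P E attr = SUMagg ety tm I P E attr / real (COUNT ety tm I P E)"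

end

theory Submission
  imports Defs
begin

inductive_set plusl :: "'a list set \<Rightarrow> 'a list set" for L where
  pl1: "u \<in> L \<Longrightarrow> u \<in> plusl L"
| pl2: "u \<in> L \<Longrightarrow> v \<in> plusl L \<Longrightarrow> u @ v \<in> plusl L"

fun lang :: "'t pat \<Rightarrow> 't list set" where
  "lang (Ev E) = {[E]}"
| "lang (SEQ P Q) = {u @ v | u v. u \<in> lang P \<and> v \<in> lang Q}"
| "lang (Plus P) = plusl (lang P)"

lemma plusl_nonempty: "w \<in> plusl L \<Longrightarrow> (\<And>u. u \<in> L \<Longrightarrow> u \<noteq> []) \<Longrightarrow> w \<noteq> []"
  by (induction rule: plusl.induct) auto

lemma lang_nonempty: "w \<in> lang P \<Longrightarrow> w \<noteq> []"
  by (induction P arbitrary: w) (auto dest: plusl_nonempty)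

definition good :: "'e set \<Rightarrow> ('e \<Rightarrow> rat) \<Rightarrow> 'e list \<Rightarrow> bool" where
  "good I tm t \<longleftrightarrow> t \<noteq> [] \<and> set t \<subseteq> I \<and> successively (\<lambda>x y. tm x < tm y) t"

lemma sorted_succ: "sorted_wrt (<) (map tm t) \<longleftrightarrow> successively (\<lambda>x y. (tm x :: rat) < tm y) t"
proof -
  have "transp ((<) :: rat \<Rightarrow> rat \<Rightarrow> bool)" by (auto simp: transp_def)
  then show ?thesis by (simp add: successively_conv_sorted_wrt[symmetric] successively_map)
qed

lemma split_good:
  assumes "good I tm t" "map ety t = u @ v" "u \<noteq> []" "v \<noteq> []"
  shows "\<exists>xs ys. t = xs @ ys \<and> map ety xs = u \<and> map ety ys = v \<and> good I tm xs \<and> good I tm ys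
           \<and> tm (last xs) < tm (hd ys)"
proof -
  obtain xs ys where t: "t = xs @ ys" "u = map ety xs" "v = map ety ys"
    using assms(2) by (auto simp: map_eq_append_conv)
  then have "xs \<noteq> []" "ys \<noteq> []" using assms by auto
  then show ?thesis using assms(1) t unfolding good_def by (auto simp: successively_append_iff)
qed

lemma good_app:
  assumes "good I tm xs" "good I tm ys" "tm (last xs) < tm (hd ys)"
  shows "good I tm (xs @ ys)"
  using assms unfolding good_def by (auto simp: successively_append_iff)

lemma plus_sub:
  assumes "t \<in> plus_matches tm M" "\<forall>t\<in>M. good I tm t \<and> map ety t \<in> L"
  shows "good I tm t \<and> map ety t \<in> plusl L"
  using assms
proof (induction rule: plus_matches.induct)
  case (single s)
  then show ?case by (auto intro: pl1)
next
  case (cons s r)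
  then show ?case by (auto intro: pl2 good_app)
qed

lemma plus_sup:
  assumes "w \<in> plusl L" "\<forall>t. good I tm t \<and> map ety t \<in> L \<longrightarrow> t \<in> M" "\<And>u. u \<in> L \<Longrightarrow> u \<noteq> []"
  shows "\<forall>t. map ety t = w \<longrightarrow> good I tm t \<longrightarrow> t \<in> plus_matches tm M"
  using assms
proof (induction rule: plusl.induct)
  case (pl1 u)
  then show ?case by (auto intro: plus_matches.single)
next
  case (pl2 u v)
  show ?case
  proof (intro allI impI)
    fix t assume t: "map ety t = u @ v" "good I tm t"
    have un: "u \<noteq> []" using pl2.hyps(1) pl2.prems(2) by blast
    have vn: "v \<noteq> []" using plusl_nonempty[OF pl2.hyps(2)] pl2.prems(2) by blast
    obtain xs ys where xy: "t = xs @ ys" "map ety xs = u" "map ety ys = v" "good I tm xs" "good I tm ys"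
           "tm (last xs) < tm (hd ys)"
      using split_good[OF t(2) t(1) un vn] by blast
    have xM: "xs \<in> M" using pl2.prems(1) xy(2,4) pl2.hyps(1) by blast
    have "\<forall>t. map ety t = v \<longrightarrow> good I tm t \<longrightarrow> t \<in> plus_matches tm M"
      using pl2.IH[OF pl2.prems] .
    then have yM: "ys \<in> plus_matches tm M" using xy(3,5) by blast
    have "xs \<noteq> []" "ys \<noteq> []" using xy(4,5) unfolding good_def by auto
    from plus_matches.cons[OF xM yM this xy(6)] show "t \<in> plus_matches tm M" using xy(1) by simp
  qed
qed

lemma matches_char: "matches ety tm I P = {t. good I tm t \<and> map ety t \<in> lang P}"
proof (induction P)
  case (Ev E)
  show ?case
  proof (intro set_eqI iffI)
    fix t assume "t \<in> matches ety tm I (Ev E)"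
    then obtain e where "t = [e]" "e \<in> I" "ety e = E" by auto
    then show "t \<in> {t. good I tm t \<and> map ety t \<in> lang (Ev E)}" by (simp add: good_def)
  next
    fix t assume t: "t \<in> {t. good I tm t \<and> map ety t \<in> lang (Ev E)}"
    then have "map ety t = [E]" by simp
    then obtain e where "t = [e]" "ety e = E" by (auto simp: map_eq_Cons_conv)
    then show "t \<in> matches ety tm I (Ev E)" using t by (auto simp: good_def)
  qed
next
  case (Plus P)
  have M: "\<forall>t\<in>matches ety tm I P. good I tm t \<and> map ety t \<in> lang P" using Plus by blast
  have M2: "\<forall>t. good I tm t \<and> map ety t \<in> lang P \<longrightarrow> t \<in> matches ety tm I P" using Plus by blast
  have ne: "\<And>u. u \<in> lang P \<Longrightarrow> u \<noteq> []" by (rule lang_nonempty)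
  show ?case
  proof (intro set_eqI iffI)
    fix t assume "t \<in> matches ety tm I (Plus P)"
    then have "t \<in> plus_matches tm (matches ety tm I P)" by (simp only: matches.simps)
    from plus_sub[OF this M] show "t \<in> {t. good I tm t \<and> map ety t \<in> lang (Plus P)}"
      by (simp only: lang.simps mem_Collect_eq)
  next
    fix t assume "t \<in> {t. good I tm t \<and> map ety t \<in> lang (Plus P)}"
    then have t: "good I tm t" "map ety t \<in> plusl (lang P)" by (simp_all only: lang.simps mem_Collect_eq)
    have "t \<in> plus_matches tm (matches ety tm I P)"
      using plus_sup[OF t(2) M2 ne] t by blast
    then show "t \<in> matches ety tm I (Plus P)" by (simp only: matches.simps)
  qed
next
  case (SEQ P Q)
  show ?case
  proof (intro set_eqI iffI)
    fix t assume "t \<in> matches ety tm I (SEQ P Q)"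
    then obtain xs ys where "t = xs @ ys" "xs \<in> matches ety tm I P" "ys \<in> matches ety tm I Q"
       "xs \<noteq> []" "ys \<noteq> []" "sorted_wrt (<) (map tm (xs @ ys))" by auto
    note h = this
    have g1: "good I tm xs \<and> map ety xs \<in> lang P" using SEQ.IH(1) h(2) by blast
    have g2: "good I tm ys \<and> map ety ys \<in> lang Q" using SEQ.IH(2) h(3) by blast
    have "good I tm t" using g1 g2 h(1,6) unfolding good_def sorted_succ by auto
    moreover have "map ety t \<in> lang (SEQ P Q)" using g1 g2 h(1) by auto
    ultimately show "t \<in> {t. good I tm t \<and> map ety t \<in> lang (SEQ P Q)}" by blast
  next
    fix t assume "t \<in> {t. good I tm t \<and> map ety t \<in> lang (SEQ P Q)}"
    then obtain u v where t: "good I tm t" "map ety t = u @ v" "u \<in> lang P" "v \<in> lang Q" by auto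
    have un: "u \<noteq> []" "v \<noteq> []" using lang_nonempty t by auto
    obtain xs ys where xy: "t = xs @ ys" "map ety xs = u" "map ety ys = v" "good I tm xs" "good I tm ys"
      using split_good[OF t(1) t(2) un] by blast
    have "sorted_wrt (<) (map tm t)" using t(1) unfolding good_def sorted_succ by auto
    have "xs \<in> matches ety tm I P" using SEQ.IH(1) xy(2,4) t(3) by blast
    moreover have "ys \<in> matches ety tm I Q" using SEQ.IH(2) xy(3,5) t(4) by blast
    moreover have "xs \<noteq> []" "ys \<noteq> []" using xy(4,5) unfolding good_def by auto
    ultimately have "\<exists>xs' ys'. t = xs' @ ys' \<and> xs' \<in> matches ety tm I P \<and> ys' \<in> matches ety tm I Q
       \<and> xs' \<noteq> [] \<and> ys' \<noteq> [] \<and> sorted_wrt (<) (map tm (xs' @ ys'))"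
      using xy(1) \<open>sorted_wrt (<) (map tm t)\<close> by blast
    then show "t \<in> matches ety tm I (SEQ P Q)" by (simp only: matches.simps mem_Collect_eq)
  qed
qed


fun fol :: "'t pat \<Rightarrow> ('t \<times> 't) set" where
  "fol (Ev E) = {}"
| "fol (SEQ P Q) = fol P \<union> fol Q \<union> {(pend P, pstart Q)}"
| "fol (Plus P) = fol P \<union> {(pend P, pstart P)}"

definition loc :: "'t pat \<Rightarrow> 't list \<Rightarrow> bool" where
  "loc P w \<longleftrightarrow> w \<noteq> [] \<and> hd w = pstart P \<and> last w = pend P \<and> set w \<subseteq> set (pat_types P)
     \<and> successively (\<lambda>x y. (x, y) \<in> fol P) w"

lemma pstart_in: "pstart P \<in> set (pat_types P)"
  by (induction P) auto

lemma pend_in: "pend P \<in> set (pat_types P)"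
  by (induction P) auto

lemma fol_sub: "fol P \<subseteq> set (pat_types P) \<times> set (pat_types P)"
  using pstart_in pend_in by (induction P) fastforce+

lemma plusl_loc: "w \<in> plusl L \<Longrightarrow> (\<And>u. u \<in> L \<Longrightarrow> loc P u) \<Longrightarrow> loc (Plus P) w"
proof (induction rule: plusl.induct)
  case (pl1 u)
  then have "loc P u" by auto
  moreover have "successively (\<lambda>x y. (x, y) \<in> fol (Plus P)) u"
    by (rule successively_mono[of "\<lambda>x y. (x, y) \<in> fol P"]) (use \<open>loc P u\<close> in \<open>auto simp: loc_def\<close>)
  ultimately show ?case unfolding loc_def by auto
next
  case (pl2 u v)
  then have "loc P u" "loc (Plus P) v" by auto
  then show ?case unfolding loc_def by (auto simp: successively_append_iff elim: successively_mono)
qed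

lemma lang_loc: "w \<in> lang P \<Longrightarrow> loc P w"
proof (induction P arbitrary: w)
  case (Ev E)
  then show ?case by (auto simp: loc_def)
next
  case (Plus P)
  then show ?case using plusl_loc[of w "lang P" P] by auto
next
  case (SEQ P Q)
  then obtain u v where "w = u @ v" "loc P u" "loc Q v" by auto
  then show ?case unfolding loc_def by (auto simp: successively_append_iff elim: successively_mono)
qed

lemma succ_closed:
  "successively R v \<Longrightarrow> v \<noteq> [] \<Longrightarrow> hd v \<in> T \<Longrightarrow> (\<And>x y. R x y \<Longrightarrow> x \<in> T \<Longrightarrow> y \<in> T) \<Longrightarrow> set v \<subseteq> T"
proof (induction v)
  case Nil
  then show ?case by simp
next
  case (Cons a v)
  then show ?case by (cases v) (auto simp: successively_Cons)
qed

lemma loc_lang: "distinct (pat_types P) \<Longrightarrow> loc P w \<Longrightarrow> w \<in> lang P"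
proof (induction P arbitrary: w)
  case (Ev E)
  then obtain x r where w: "w = x # r" unfolding loc_def by (cases w) auto
  then have "r = []" using Ev unfolding loc_def by (cases r) auto
  then show ?case using Ev w unfolding loc_def by auto
next
  case (SEQ P Q)
  define TP where "TP = set (pat_types P)"
  define TQ where "TQ = set (pat_types Q)"
  have dP: "distinct (pat_types P)" and dQ: "distinct (pat_types Q)" and disj: "TP \<inter> TQ = {}"
    using SEQ.prems(1) unfolding TP_def TQ_def by auto
  have fP: "fol P \<subseteq> TP \<times> TP" and fQ: "fol Q \<subseteq> TQ \<times> TQ" using fol_sub TP_def TQ_def by auto
  have sP: "pstart P \<in> TP" "pend P \<in> TP" and sQ: "pstart Q \<in> TQ" "pend Q \<in> TQ"
    using pstart_in pend_in TP_def TQ_def by auto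
  have w: "w \<noteq> []" "hd w = pstart P" "last w = pend Q" "set w \<subseteq> TP \<union> TQ"
     "successively (\<lambda>x y. (x, y) \<in> fol (SEQ P Q)) w"
    using SEQ.prems(2) unfolding loc_def TP_def TQ_def by auto
  define u where "u = takeWhile (\<lambda>x. x \<in> TP) w"
  define v where "v = dropWhile (\<lambda>x. x \<in> TP) w"
  have wuv: "w = u @ v" unfolding u_def v_def by simp
  have uTP: "set u \<subseteq> TP" unfolding u_def by (auto dest: set_takeWhileD)
  have un: "u \<noteq> []" using w sP unfolding u_def by (cases w) auto
  have vn: "v \<noteq> []"
  proof
    assume "v = []"
    then have "\<forall>x\<in>set w. x \<in> TP" unfolding v_def by simp
    then have "pend Q \<in> TP" using w last_in_set by metis
    then show False using sQ disj by blast
  qed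
  have hv: "hd v \<notin> TP" using vn unfolding v_def by (rule hd_dropWhile)
  have "hd v \<in> set w" using vn wuv by simp
  then have hvQ: "hd v \<in> TQ" using hv w(4) by blast
  have sv: "successively (\<lambda>x y. (x, y) \<in> fol (SEQ P Q)) v" "successively (\<lambda>x y. (x, y) \<in> fol (SEQ P Q)) u"
    and junc: "(last u, hd v) \<in> fol (SEQ P Q)"
    using w(5) un vn unfolding wuv by (auto simp: successively_append_iff)
  have vTQ: "set v \<subseteq> TQ"
  proof (rule succ_closed[OF sv(1) vn hvQ])
    fix x y assume "(x, y) \<in> fol (SEQ P Q)" "x \<in> TQ"
    then show "y \<in> TQ" using fP fQ sP disj by auto
  qed
  have luP: "last u \<in> TP" using uTP un by auto
  have junc2: "last u = pend P" "hd v = pstart Q"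
    using junc luP hvQ hv fP fQ disj by auto
  have "successively (\<lambda>x y. (x, y) \<in> fol P) u"
  proof (rule successively_mono[OF sv(2)])
    fix x y assume "x \<in> set u" "y \<in> set u" "(x, y) \<in> fol (SEQ P Q)"
    then show "(x, y) \<in> fol P" using uTP fQ sQ disj by auto
  qed
  then have "loc P u" using un uTP w junc2 wuv unfolding loc_def TP_def by auto
  then have "u \<in> lang P" using SEQ.IH(1) dP by blast
  have "successively (\<lambda>x y. (x, y) \<in> fol Q) v"
  proof (rule successively_mono[OF sv(1)])
    fix x y assume "x \<in> set v" "y \<in> set v" "(x, y) \<in> fol (SEQ P Q)"
    then show "(x, y) \<in> fol Q" using vTQ fP sP disj by auto
  qed
  then have "loc Q v" using vn vTQ w junc2 wuv unfolding loc_def TQ_def by auto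
  then have "v \<in> lang Q" using SEQ.IH(2) dQ by blast
  show ?case using \<open>u \<in> lang P\<close> \<open>v \<in> lang Q\<close> wuv by auto
next
  case (Plus P)
  have dP: "distinct (pat_types P)" using Plus.prems by simp
  have main: "\<And>w. length w \<le> n \<Longrightarrow> loc (Plus P) w \<Longrightarrow> w \<in> plusl (lang P)" for n
  proof (induction n)
    case 0
    then show ?case by (auto simp: loc_def)
  next
    case (Suc n w)
    let ?j = "(pend P, pstart P)"
    have w: "w \<noteq> []" "hd w = pstart P" "last w = pend P" "set w \<subseteq> set (pat_types P)"
      "\<And>i. Suc i < length w \<Longrightarrow> (w ! i, w ! Suc i) \<in> fol P \<union> {?j}"
      using Suc.prems(2) unfolding loc_def successively_conv_nth by auto
    show ?case
    proof (cases "\<exists>i. Suc i < length w \<and> (w ! i, w ! Suc i) = ?j")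
      case False
      then have "loc P w" using w unfolding loc_def successively_conv_nth by fastforce
      then show ?thesis using Plus.IH dP by (auto intro: pl1)
    next
      case True
      define i where "i = (LEAST i. Suc i < length w \<and> (w ! i, w ! Suc i) = ?j)"
      have i: "Suc i < length w" "(w ! i, w ! Suc i) = ?j"
        using LeastI_ex[OF True] unfolding i_def by auto
      have mi: "\<And>k. k < i \<Longrightarrow> (w ! k, w ! Suc k) \<noteq> ?j"
      proof
        fix k assume k: "k < i" "(w ! k, w ! Suc k) = ?j"
        have "Suc k < length w" using k i(1) by simp
        then have "i \<le> k" unfolding i_def using k(2) by (intro Least_le) simp
        then show False using k(1) by simp
      qed
      define u where "u = take (Suc i) w"
      define r where "r = drop (Suc i) w"
      have wur: "w = u @ r" unfolding u_def r_def by simp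
      have lu: "length u = Suc i" using i unfolding u_def by simp
      have "loc P u" unfolding loc_def successively_conv_nth
      proof (intro conjI allI impI)
        show "u \<noteq> []" using lu by auto
        show "hd u = pstart P" using w(1,2) unfolding u_def by (cases w) auto
        show "last u = pend P" using i lu unfolding u_def by (simp add: take_Suc_conv_app_nth)
        show "set u \<subseteq> set (pat_types P)" using w(4) unfolding u_def by (meson order_trans set_take_subset)
        fix k assume k: "Suc k < length u"
        then have "(w ! k, w ! Suc k) \<in> fol P \<union> {?j}" "(w ! k, w ! Suc k) \<noteq> ?j"
          using w(5) mi lu i by auto
        then show "(u ! k, u ! Suc k) \<in> fol P" using k lu unfolding u_def by auto
      qed
      then have uL: "u \<in> lang P" using Plus.IH dP by blast
      have lr: "length r < length w" "r \<noteq> []" using i unfolding r_def by auto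
      have "loc (Plus P) r" unfolding loc_def
      proof (intro conjI)
        show "r \<noteq> []" by (fact lr(2))
        show "hd r = pstart (Plus P)" using i unfolding r_def by (simp add: hd_drop_conv_nth)
        show "last r = pend (Plus P)" using w(3) lr wur by simp
        show "set r \<subseteq> set (pat_types (Plus P))" using w(4) wur by auto
        show "successively (\<lambda>x y. (x, y) \<in> fol (Plus P)) r"
          using Suc.prems(2) unfolding loc_def wur by (simp add: successively_append_iff)
      qed
      then have "r \<in> plusl (lang P)" using Suc.IH Suc.prems(1) lr by auto
      then show ?thesis using uL wur by (auto intro: pl2)
    qed
  qed
  show ?case using main[of w "length w"] Plus.prems by auto
qed

lemma lang_eq: "distinct (pat_types P) \<Longrightarrow> lang P = {w. loc P w}"
  using lang_loc loc_lang by blast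


lemma Inf_UN_helper: "Inf (\<Union> (f ` A)) = (INF a\<in>A. Inf (f a :: 'a::complete_lattice set))"
  by (rule antisym) (auto intro!: INF_greatest Inf_greatest intro: Inf_lower INF_lower2 Inf_lower2)

lemma Sup_UN_helper: "Sup (\<Union> (f ` A)) = (SUP a\<in>A. Sup (f a :: 'a::complete_lattice set))"
  by (rule antisym) (auto intro!: SUP_least Sup_least intro: Sup_upper SUP_upper2 Sup_upper2)

locale gr =
  fixes A :: "'e \<Rightarrow> bool" and F :: "'e \<Rightarrow> 'e \<Rightarrow> bool" and S :: "'e \<Rightarrow> bool"
    and Fn :: "'e \<Rightarrow> bool" and tm :: "'e \<Rightarrow> rat"
  assumes finA: "finite {x. A x}"
    and Ftm: "F x y \<Longrightarrow> tm x < tm y"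
begin

definition ch where "ch t \<longleftrightarrow> t \<noteq> [] \<and> (\<forall>x\<in>set t. A x) \<and> successively F t"
definition MM where "MM = {t. ch t \<and> S (hd t) \<and> Fn (last t)}"
definition VV where "VV = {e. \<exists>t\<in>MM. e \<in> set t}"
definition EE where "EE = {(a, b). \<exists>t\<in>MM. \<exists>i. Suc i < length t \<and> t ! i = a \<and> t ! Suc i = b}"
definition pr where "pr e = {p \<in> VV. (p, e) \<in> EE}"
definition Pre where "Pre e = {w. ch w \<and> S (hd w) \<and> last w = e}"
definition En where "En = {e \<in> VV. Fn e}"

lemma ch_distinct: "ch t \<Longrightarrow> distinct t"
proof -
  assume "ch t"
  then have "successively F t" by (simp add: ch_def)
  then have "successively (\<lambda>x y. tm x < tm y) t" by (rule successively_mono) (use Ftm in auto)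
  then have "sorted_wrt (<) (map tm t)" by (simp add: sorted_succ)
  then have "distinct (map tm t)" by (simp add: strict_sorted_iff)
  then show "distinct t" by (simp add: distinct_map)
qed

lemma finite_ch: "finite {t. ch t}"
proof (rule finite_subset[OF _ finite_subset_distinct[OF finA]])
  show "{t. ch t} \<subseteq> {xs. set xs \<subseteq> {x. A x} \<and> distinct xs}"
    using ch_distinct by (auto simp: ch_def)
qed

lemma finite_MM: "finite MM"
  by (rule finite_subset[OF _ finite_ch]) (auto simp: MM_def)

lemma finite_Pre: "finite (Pre e)"
  by (rule finite_subset[OF _ finite_ch]) (auto simp: Pre_def)

lemma VV_A: "e \<in> VV \<Longrightarrow> A e"
  by (auto simp: VV_def MM_def ch_def)

lemma finite_VV: "finite VV"
  by (rule finite_subset[OF _ finA]) (auto dest: VV_A)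

lemma finite_pr: "finite (pr e)"
  using finite_VV by (auto simp: pr_def)

lemma finite_En: "finite En"
  using finite_VV by (auto simp: En_def)

lemma ch_app: "ch u \<Longrightarrow> ch v \<Longrightarrow> F (last u) (hd v) \<Longrightarrow> ch (u @ v)"
  by (auto simp: ch_def successively_append_iff)

lemma ch_split: "ch (u @ v) \<Longrightarrow> u \<noteq> [] \<Longrightarrow> v \<noteq> [] \<Longrightarrow> ch u \<and> ch v \<and> F (last u) (hd v)"
  by (auto simp: ch_def successively_append_iff)

lemma ch_glue: "ch (u @ [e]) \<Longrightarrow> ch (e # v) \<Longrightarrow> ch (u @ e # v)"
proof -
  assume a: "ch (u @ [e])" "ch (e # v)"
  show ?thesis
  proof (cases v)
    case Nil
    then show ?thesis using a by simp
  next
    case (Cons b v')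
    then have "ch [e] \<and> ch v \<and> F e b" using ch_split[of "[e]" v] a(2) by auto
    then have "ch ((u @ [e]) @ v)" using a(1) Cons ch_app[of "u @ [e]" v] by auto
    then show ?thesis by simp
  qed
qed

lemma VV_split:
  assumes "e \<in> VV"
  shows "\<exists>u v. ch (u @ [e]) \<and> S (hd (u @ [e])) \<and> ch (e # v) \<and> Fn (last (e # v))"
proof -
  obtain t where t: "t \<in> MM" "e \<in> set t" using assms by (auto simp: VV_def)
  then obtain u v where tuv: "t = u @ e # v" by (auto simp: in_set_conv_decomp)
  have c: "ch ((u @ [e]) @ v)" "S (hd t)" "Fn (last t)" using t tuv by (auto simp: MM_def)
  have c1: "ch (u @ [e])"
  proof (cases v)
    case Nil then show ?thesis using c by simp
  next
    case (Cons b v') then show ?thesis using ch_split[OF c(1)] by auto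
  qed
  have c2: "ch (e # v)"
  proof (cases u)
    case Nil then show ?thesis using c by simp
  next
    case (Cons b u')
    then have "ch (u @ (e # v))" using c by simp
    then show ?thesis using ch_split[of u "e # v"] Cons by auto
  qed
  have "S (hd (u @ [e]))" using c(2) tuv by (cases u) auto
  moreover have "Fn (last (e # v))" using c(3) tuv by simp
  ultimately show ?thesis using c1 c2 by blast
qed

lemma edge_intro: "x @ a # b # y \<in> MM \<Longrightarrow> (a, b) \<in> EE"
  unfolding EE_def by (auto intro!: bexI[of _ "x @ a # b # y"] exI[of _ "length x"] simp: nth_append)

lemma pr_char: "p \<in> pr e \<Longrightarrow> p \<in> VV \<and> F p e \<and> A e"
proof -
  assume "p \<in> pr e"
  then obtain t i where t: "p \<in> VV" "t \<in> MM" "Suc i < length t" "t ! i = p" "t ! Suc i = e"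
    by (auto simp: pr_def EE_def)
  then have "F p e" using successively_nth[of F t i] by (auto simp: MM_def ch_def)
  moreover have "A e" using t nth_mem[of "Suc i" t] by (auto simp: MM_def ch_def)
  ultimately show ?thesis using t by auto
qed

lemma Pre_nonempty: "e \<in> VV \<Longrightarrow> Pre e \<noteq> {}"
  using VV_split[of e] by (auto simp: Pre_def)

lemma Pre_rec:
  assumes "e \<in> VV"
  shows "w \<in> Pre e \<longleftrightarrow> (w = [e] \<and> S e) \<or> (\<exists>p\<in>pr e. \<exists>w'\<in>Pre p. w = w' @ [e])"
proof
  assume w: "w \<in> Pre e"
  then have wc: "ch w" "S (hd w)" "last w = e" by (auto simp: Pre_def)
  then have wd: "w = butlast w @ [e]" by (auto simp: ch_def)
  show "(w = [e] \<and> S e) \<or> (\<exists>p\<in>pr e. \<exists>w'\<in>Pre p. w = w' @ [e])"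
  proof (cases "butlast w = []")
    case True
    then show ?thesis using wd wc by (metis append_Nil list.sel(1))
  next
    case False
    define w' where "w' = butlast w"
    define p where "p = last w'"
    have c: "ch w'" "F p e" using ch_split[of w' "[e]"] wc wd False unfolding w'_def p_def by auto
    have sw: "S (hd w')" using wc wd False unfolding w'_def by (metis hd_append2)
    then have w'P: "w' \<in> Pre p" using c unfolding Pre_def p_def by auto
    obtain u v where uv: "ch (u @ [e])" "S (hd (u @ [e]))" "ch (e # v)" "Fn (last (e # v))"
      using VV_split[OF assms] by blast
    have cw: "ch (w' @ e # v)" using ch_glue[of w' e v] wc wd uv unfolding w'_def by simp
    have tM: "w' @ e # v \<in> MM" using cw sw False uv(4) unfolding MM_def w'_def by auto
    have w'd: "w' = butlast w' @ [p]" using False unfolding w'_def p_def by simp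
    have "butlast w' @ p # e # v \<in> MM" using tM w'd by (metis append.assoc append_Cons append_Nil)
    then have "(p, e) \<in> EE" by (rule edge_intro)
    moreover have "p \<in> set (w' @ e # v)" using False unfolding w'_def p_def by simp
    then have "p \<in> VV" using tM unfolding VV_def by blast
    ultimately have "p \<in> pr e" by (simp add: pr_def)
    then show ?thesis using w'P wd unfolding w'_def by blast
  qed
next
  assume "(w = [e] \<and> S e) \<or> (\<exists>p\<in>pr e. \<exists>w'\<in>Pre p. w = w' @ [e])"
  then show "w \<in> Pre e"
  proof
    assume "w = [e] \<and> S e"
    then show ?thesis using VV_A[OF assms] by (auto simp: Pre_def ch_def)
  next
    assume "\<exists>p\<in>pr e. \<exists>w'\<in>Pre p. w = w' @ [e]"
    then obtain p w' where p: "p \<in> pr e" "w' \<in> Pre p" "w = w' @ [e]" by blast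
    have pc: "p \<in> VV" "F p e" "A e" using pr_char[OF p(1)] by auto
    have w': "ch w'" "S (hd w')" "last w' = p" "w' \<noteq> []" using p(2) by (auto simp: Pre_def ch_def)
    have "ch [e]" using pc by (simp add: ch_def)
    then have "ch w" using ch_app[of w' "[e]"] w' pc p(3) by auto
    then show ?thesis using w' p(3) by (auto simp: Pre_def)
  qed
qed

lemma Pre_decomp:
  assumes "e \<in> VV"
  shows "Pre e = (if S e then {[e]} else {}) \<union> (\<Union>p\<in>pr e. (\<lambda>w. w @ [e]) ` Pre p)"
proof (rule set_eqI)
  fix w show "w \<in> Pre e \<longleftrightarrow> w \<in> (if S e then {[e]} else {}) \<union> (\<Union>p\<in>pr e. (\<lambda>w. w @ [e]) ` Pre p)"
    unfolding Pre_rec[OF assms] by (auto simp: image_iff)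
qed

lemma sum_rec:
  assumes "e \<in> VV"
  shows "(\<Sum>w\<in>Pre e. f w) = (if S e then f [e] else 0) + (\<Sum>p\<in>pr e. \<Sum>w\<in>Pre p. f (w @ [e]))"
proof -
  have ne: "\<And>p w. w \<in> Pre p \<Longrightarrow> w \<noteq> []" by (auto simp: Pre_def ch_def)
  have d1: "(if S e then {[e]} else {}) \<inter> (\<Union>p\<in>pr e. (\<lambda>w. w @ [e]) ` Pre p) = {}"
    using ne by auto
  have fin2: "finite (\<Union>p\<in>pr e. (\<lambda>w. w @ [e]) ` Pre p)" using finite_pr finite_Pre by auto
  have s1: "(\<Sum>w\<in>Pre e. f w) = (\<Sum>w\<in>(if S e then {[e]} else {}). f w) + (\<Sum>w\<in>(\<Union>p\<in>pr e. (\<lambda>w. w @ [e]) ` Pre p). f w)"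
    unfolding Pre_decomp[OF assms] by (rule sum.union_disjoint) (use d1 fin2 in auto)
  have s2: "(\<Sum>w\<in>(\<Union>p\<in>pr e. (\<lambda>w. w @ [e]) ` Pre p). f w) = (\<Sum>p\<in>pr e. \<Sum>w\<in>(\<lambda>w. w @ [e]) ` Pre p. f w)"
  proof (rule sum.UNION_disjoint)
    show "finite (pr e)" by (rule finite_pr)
    show "\<forall>i\<in>pr e. finite ((\<lambda>w. w @ [e]) ` Pre i)" using finite_Pre by auto
    show "\<forall>i\<in>pr e. \<forall>j\<in>pr e. i \<noteq> j \<longrightarrow> (\<lambda>w. w @ [e]) ` Pre i \<inter> (\<lambda>w. w @ [e]) ` Pre j = {}"
      by (auto simp: Pre_def)
  qed
  have s3: "(\<Sum>w\<in>(\<lambda>w. w @ [e]) ` Pre p. f w) = (\<Sum>w\<in>Pre p. f (w @ [e]))" for p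
    by (rule sum.reindex_cong[where l = "\<lambda>w. w @ [e]"]) (auto simp: inj_on_def)
  show ?thesis using s1 s2 s3 by simp
qed

lemma set_rec:
  assumes "e \<in> VV"
  shows "{g x | x w. w \<in> Pre e \<and> x \<in> set w \<and> Q x}
       = (if Q e then {g e} else {}) \<union> (\<Union>p\<in>pr e. {g x | x w. w \<in> Pre p \<and> x \<in> set w \<and> Q x})"
    (is "?L = ?R")
proof
  show "?L \<subseteq> ?R"
  proof
    fix y assume "y \<in> ?L"
    then obtain x w where xw: "y = g x" "w \<in> Pre e" "x \<in> set w" "Q x" by blast
    from Pre_rec[OF assms, THEN iffD1, OF xw(2)] show "y \<in> ?R"
    proof (elim disjE conjE bexE)
      assume "w = [e]" then show ?thesis using xw by auto
    next
      fix p w' assume "p \<in> pr e" "w' \<in> Pre p" "w = w' @ [e]"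
      then show ?thesis using xw by auto
    qed
  qed
next
  show "?R \<subseteq> ?L"
  proof
    fix y assume "y \<in> ?R"
    then show "y \<in> ?L"
    proof
      assume y: "y \<in> (if Q e then {g e} else {})"
      obtain w where w: "w \<in> Pre e" using Pre_nonempty[OF assms] by blast
      then have "e \<in> set w" by (auto simp: Pre_def ch_def)
      then show ?thesis using w y by (auto split: if_splits)
    next
      assume "y \<in> (\<Union>p\<in>pr e. {g x | x w. w \<in> Pre p \<and> x \<in> set w \<and> Q x})"
      then obtain p x w where "p \<in> pr e" "w \<in> Pre p" "x \<in> set w" "Q x" "y = g x" by blast
      moreover have "w @ [e] \<in> Pre e" using Pre_rec[OF assms] calculation by blast
      ultimately have "y = g x \<and> w @ [e] \<in> Pre e \<and> x \<in> set (w @ [e]) \<and> Q x" by auto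
      then show ?thesis by blast
    qed
  qed
qed

lemma VV_induct:
  assumes "e \<in> VV" "\<And>e. e \<in> VV \<Longrightarrow> (\<And>p. p \<in> pr e \<Longrightarrow> Q p) \<Longrightarrow> Q e"
  shows "Q e"
proof -
  have "e \<in> VV \<longrightarrow> Q e"
  proof (induction e rule: measure_induct_rule[of "\<lambda>e. card {x. A x \<and> tm x < tm e}"])
    case (less e)
    show ?case
    proof
      assume e: "e \<in> VV"
      show "Q e"
      proof (rule assms(2)[OF e])
        fix p assume p: "p \<in> pr e"
        then have pc: "p \<in> VV" "F p e" using pr_char by auto
        have "{x. A x \<and> tm x < tm p} \<subset> {x. A x \<and> tm x < tm e}"
          using Ftm[OF pc(2)] VV_A[OF pc(1)] by auto
        then have "card {x. A x \<and> tm x < tm p} < card {x. A x \<and> tm x < tm e}"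
          by (rule psubset_card_mono[rotated]) (rule finite_subset[OF _ finA], auto)
        then show "Q p" using less pc(1) by blast
      qed
    qed
  qed
  then show ?thesis using assms(1) by blast
qed

lemma MM_decomp: "MM = (\<Union>e\<in>En. Pre e)"
proof
  show "MM \<subseteq> (\<Union>e\<in>En. Pre e)"
  proof
    fix t assume t: "t \<in> MM"
    then have "last t \<in> En" "t \<in> Pre (last t)"
      by (auto simp: MM_def En_def VV_def Pre_def ch_def intro!: bexI[of _ t])
    then show "t \<in> (\<Union>e\<in>En. Pre e)" by blast
  qed
next
  show "(\<Union>e\<in>En. Pre e) \<subseteq> MM" by (auto simp: MM_def En_def Pre_def)
qed

lemma sum_MM: "(\<Sum>t\<in>MM. f t) = (\<Sum>e\<in>En. \<Sum>w\<in>Pre e. f w)"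
  unfolding MM_decomp
proof (rule sum.UNION_disjoint)
  show "finite En" by (rule finite_En)
  show "\<forall>i\<in>En. finite (Pre i)" using finite_Pre by blast
  show "\<forall>i\<in>En. \<forall>j\<in>En. i \<noteq> j \<longrightarrow> Pre i \<inter> Pre j = {}" by (auto simp: Pre_def)
qed

end


context gr
begin

lemma cnt_inv:
  assumes h: "\<forall>e\<in>VV. cnt e = (if S e then 1 else 0) + (\<Sum>p\<in>pr e. cnt p)"
    and e: "e \<in> VV"
  shows "cnt e = card (Pre e)"
proof (rule VV_induct[where Q = "\<lambda>e. cnt e = card (Pre e)", OF e])
  fix e assume e: "e \<in> VV" and IH: "\<And>p. p \<in> pr e \<Longrightarrow> cnt p = card (Pre p)"
  have "card (Pre e) = (\<Sum>w\<in>Pre e. (1::nat))" by simp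
  also have "\<dots> = (if S e then 1 else 0) + (\<Sum>p\<in>pr e. \<Sum>w\<in>Pre p. (1::nat))"
    by (rule sum_rec[OF e])
  also have "\<dots> = (if S e then 1 else 0) + (\<Sum>p\<in>pr e. cnt p)"
    using IH by (intro arg_cong2[where f = "(+)"] refl sum.cong) auto
  also have "\<dots> = cnt e" using h e by simp
  finally show "cnt e = card (Pre e)" by simp
qed

lemma cntE_inv:
  assumes h: "\<forall>e\<in>VV. cnt e = (if S e then 1 else 0) + (\<Sum>p\<in>pr e. cnt p)"
    and hE: "\<forall>e\<in>VV. cntE e = (if Q e then cnt e else 0) + (\<Sum>p\<in>pr e. cntE p)"
    and e: "e \<in> VV"
  shows "cntE e = (\<Sum>w\<in>Pre e. length (filter Q w))"
proof (rule VV_induct[where Q = "\<lambda>e. cntE e = (\<Sum>w\<in>Pre e. length (filter Q w))", OF e])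
  fix e assume e: "e \<in> VV" and IH: "\<And>p. p \<in> pr e \<Longrightarrow> cntE p = (\<Sum>w\<in>Pre p. length (filter Q w))"
  have pV: "\<And>p. p \<in> pr e \<Longrightarrow> p \<in> VV" using pr_char by blast
  have "(\<Sum>w\<in>Pre e. length (filter Q w)) = (if S e then length (filter Q [e]) else 0)
      + (\<Sum>p\<in>pr e. \<Sum>w\<in>Pre p. length (filter Q (w @ [e])))"
    by (rule sum_rec[OF e])
  also have "\<dots> = (if S e then (if Q e then 1 else 0) else 0)
      + (\<Sum>p\<in>pr e. cntE p + (if Q e then cnt p else 0))"
  proof -
    have "(\<Sum>w\<in>Pre p. length (filter Q (w @ [e]))) = cntE p + (if Q e then cnt p else 0)"
      if p: "p \<in> pr e" for p
    proof -
      have "(\<Sum>w\<in>Pre p. length (filter Q (w @ [e])))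
          = (\<Sum>w\<in>Pre p. length (filter Q w) + (if Q e then 1 else 0))" by simp
      also have "\<dots> = cntE p + (if Q e then card (Pre p) else 0)"
        by (simp add: sum.distrib IH[OF p])
      also have "\<dots> = cntE p + (if Q e then cnt p else 0)"
        using cnt_inv[OF h pV[OF p]] by simp
      finally show ?thesis .
    qed
    then show ?thesis by simp
  qed
  also have "\<dots> = cntE e"
    using hE e h by (simp add: sum.distrib)
  finally show "cntE e = (\<Sum>w\<in>Pre e. length (filter Q w))" by simp
qed

lemma sm_inv:
  assumes h: "\<forall>e\<in>VV. cnt e = (if S e then 1 else 0) + (\<Sum>p\<in>pr e. cnt p)"
    and hs: "\<forall>e\<in>VV. sm e = (if Q e then attr e * real (cnt e) else 0) + (\<Sum>p\<in>pr e. sm p)"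
    and e: "e \<in> VV"
  shows "sm e = (\<Sum>w\<in>Pre e. \<Sum>x\<leftarrow>filter Q w. (attr x :: real))"
proof (rule VV_induct[where Q = "\<lambda>e. sm e = (\<Sum>w\<in>Pre e. \<Sum>x\<leftarrow>filter Q w. attr x)", OF e])
  fix e assume e: "e \<in> VV" and IH: "\<And>p. p \<in> pr e \<Longrightarrow> sm p = (\<Sum>w\<in>Pre p. \<Sum>x\<leftarrow>filter Q w. attr x)"
  have pV: "\<And>p. p \<in> pr e \<Longrightarrow> p \<in> VV" using pr_char by blast
  have "(\<Sum>w\<in>Pre e. \<Sum>x\<leftarrow>filter Q w. attr x) = (if S e then (\<Sum>x\<leftarrow>filter Q [e]. attr x) else 0)
      + (\<Sum>p\<in>pr e. \<Sum>w\<in>Pre p. \<Sum>x\<leftarrow>filter Q (w @ [e]). attr x)"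
    by (rule sum_rec[OF e])
  also have "\<dots> = (if S e then (if Q e then attr e else 0) else 0)
      + (\<Sum>p\<in>pr e. sm p + (if Q e then attr e * real (cnt p) else 0))"
  proof -
    have "(\<Sum>w\<in>Pre p. \<Sum>x\<leftarrow>filter Q (w @ [e]). attr x) = sm p + (if Q e then attr e * real (cnt p) else 0)"
      if p: "p \<in> pr e" for p
    proof -
      have "(\<Sum>w\<in>Pre p. \<Sum>x\<leftarrow>filter Q (w @ [e]). attr x)
          = (\<Sum>w\<in>Pre p. (\<Sum>x\<leftarrow>filter Q w. attr x) + (if Q e then attr e else 0))" by simp
      also have "\<dots> = sm p + (if Q e then attr e * real (card (Pre p)) else 0)"
        by (simp add: sum.distrib IH[OF p])
      also have "\<dots> = sm p + (if Q e then attr e * real (cnt p) else 0)"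
        using cnt_inv[OF h pV[OF p]] by simp
      finally show ?thesis .
    qed
    then show ?thesis by simp
  qed
  also have "\<dots> = sm e"
    using hs e h by (simp add: sum.distrib sum_distrib_left distrib_left)
  finally show "sm e = (\<Sum>w\<in>Pre e. \<Sum>x\<leftarrow>filter Q w. attr x)" by simp
qed

lemma mn_inv:
  fixes mn g :: "'e \<Rightarrow> 'b::complete_lattice"
  assumes hm: "\<forall>e\<in>VV. mn e = Inf ((if Q e then {g e} else {}) \<union> mn ` pr e)"
    and e: "e \<in> VV"
  shows "mn e = Inf {g x | x w. w \<in> Pre e \<and> x \<in> set w \<and> Q x}"
proof (rule VV_induct[where Q = "\<lambda>e. mn e = Inf {g x | x w. w \<in> Pre e \<and> x \<in> set w \<and> Q x}", OF e])
  fix e assume e: "e \<in> VV" and IH: "\<And>p. p \<in> pr e \<Longrightarrow> mn p = Inf {g x | x w. w \<in> Pre p \<and> x \<in> set w \<and> Q x}"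
  have "Inf {g x | x w. w \<in> Pre e \<and> x \<in> set w \<and> Q x}
     = Inf ((if Q e then {g e} else {}) \<union> (\<Union>p\<in>pr e. {g x | x w. w \<in> Pre p \<and> x \<in> set w \<and> Q x}))"
    by (subst set_rec[OF e]) (rule refl)
  also have "\<dots> = inf (Inf (if Q e then {g e} else {})) (INF p\<in>pr e. Inf {g x | x w. w \<in> Pre p \<and> x \<in> set w \<and> Q x})"
    by (simp only: Inf_union_distrib Inf_UN_helper)
  also have "\<dots> = inf (Inf (if Q e then {g e} else {})) (Inf (mn ` pr e))"
    using IH by simp
  also have "\<dots> = mn e" using hm e by (simp only: Inf_union_distrib)
  finally show "mn e = Inf {g x | x w. w \<in> Pre e \<and> x \<in> set w \<and> Q x}" by simp
qed

lemma mx_inv: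
  fixes mx g :: "'e \<Rightarrow> 'b::complete_lattice"
  assumes hm: "\<forall>e\<in>VV. mx e = Sup ((if Q e then {g e} else {}) \<union> mx ` pr e)"
    and e: "e \<in> VV"
  shows "mx e = Sup {g x | x w. w \<in> Pre e \<and> x \<in> set w \<and> Q x}"
proof (rule VV_induct[where Q = "\<lambda>e. mx e = Sup {g x | x w. w \<in> Pre e \<and> x \<in> set w \<and> Q x}", OF e])
  fix e assume e: "e \<in> VV" and IH: "\<And>p. p \<in> pr e \<Longrightarrow> mx p = Sup {g x | x w. w \<in> Pre p \<and> x \<in> set w \<and> Q x}"
  have "Sup {g x | x w. w \<in> Pre e \<and> x \<in> set w \<and> Q x}
     = Sup ((if Q e then {g e} else {}) \<union> (\<Union>p\<in>pr e. {g x | x w. w \<in> Pre p \<and> x \<in> set w \<and> Q x}))"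
    by (subst set_rec[OF e]) (rule refl)
  also have "\<dots> = sup (Sup (if Q e then {g e} else {})) (SUP p\<in>pr e. Sup {g x | x w. w \<in> Pre p \<and> x \<in> set w \<and> Q x})"
    by (simp only: Sup_union_distrib Sup_UN_helper)
  also have "\<dots> = sup (Sup (if Q e then {g e} else {})) (Sup (mx ` pr e))"
    using IH by simp
  also have "\<dots> = mx e" using hm e by (simp only: Sup_union_distrib)
  finally show "mx e = Sup {g x | x w. w \<in> Pre e \<and> x \<in> set w \<and> Q x}" by simp
qed

lemma agg_set: "{g x | x t. t \<in> MM \<and> x \<in> set t \<and> Q x} = (\<Union>e\<in>En. {g x | x w. w \<in> Pre e \<and> x \<in> set w \<and> Q x})"
  unfolding MM_decomp by blast

end

lemma succ_conj: "successively (\<lambda>x y. P x y \<and> Q x y) xs \<longleftrightarrow> successively P xs \<and> successively Q xs"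
  by (auto simp: successively_conv_nth)

theorem theorem8:
  fixes ety :: "'e \<Rightarrow> 't" and tm :: "'e \<Rightarrow> rat" and I :: "'e set" and P :: "'t pat"
    and E :: 't and attr :: "'e \<Rightarrow> real"
    and cnt :: "'e \<Rightarrow> nat" and cntE :: "'e \<Rightarrow> nat"
    and mn :: "'e \<Rightarrow> ereal" and mx :: "'e \<Rightarrow> ereal" and sm :: "'e \<Rightarrow> real"
  assumes wf: "wf_pat P"
    and finI: "finite I"
    and time_nonneg: "\<forall>e \<in> I. tm e \<ge> 0"
    and cnt_def: "\<forall>e \<in> greta_V ety tm I P.
        cnt e = (if ety e = pstart P then 1 else 0) + (\<Sum>p \<in> preds ety tm I P e. cnt p)"
    and recE: "\<forall>e \<in> greta_V ety tm I P. ety e = E \<longrightarrow>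
        cntE e = cnt e + (\<Sum>p \<in> preds ety tm I P e. cntE p)
      \<and> mn e = Inf ({ereal (attr e)} \<union> mn ` preds ety tm I P e)
      \<and> mx e = Sup ({ereal (attr e)} \<union> mx ` preds ety tm I P e)
      \<and> sm e = attr e * real (cnt e) + (\<Sum>p \<in> preds ety tm I P e. sm p)"
    and recN: "\<forall>e \<in> greta_V ety tm I P. ety e \<noteq> E \<longrightarrow>
        cntE e = (\<Sum>p \<in> preds ety tm I P e. cntE p)
      \<and> mn e = Inf (mn ` preds ety tm I P e)
      \<and> mx e = Sup (mx ` preds ety tm I P e)
      \<and> sm e = (\<Sum>p \<in> preds ety tm I P e. sm p)"
  shows "COUNT ety tm I P E = (\<Sum>e \<in> end_events ety tm I P. cntE e)
    \<and> MINagg ety tm I P E attr = Inf (mn ` end_events ety tm I P)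
    \<and> MAXagg ety tm I P E attr = Sup (mx ` end_events ety tm I P)
    \<and> SUMagg ety tm I P E attr = (\<Sum>e \<in> end_events ety tm I P. sm e)
    \<and> AVGagg ety tm I P E attr =
        (\<Sum>e \<in> end_events ety tm I P. sm e) / real (\<Sum>e \<in> end_events ety tm I P. cntE e)"
proof -
  define A where "A = (\<lambda>x. x \<in> I \<and> ety x \<in> set (pat_types P))"
  define F where "F = (\<lambda>x y. tm x < tm y \<and> (ety x, ety y) \<in> fol P)"
  define S where "S = (\<lambda>x. ety x = pstart P)"
  define Fn where "Fn = (\<lambda>x. ety x = pend P)"
  interpret g: gr A F S Fn tm
  proof
    show "finite {x. A x}" by (rule finite_subset[OF _ finI]) (auto simp: A_def)
    show "F x y \<Longrightarrow> tm x < tm y" for x y by (simp add: F_def)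
  qed
  have dist: "distinct (pat_types P)" using wf by (simp add: wf_pat_def)
  have MMeq: "matches ety tm I P = g.MM"
  proof (rule set_eqI)
    fix t
    have "t \<in> g.MM \<longleftrightarrow> g.ch t \<and> S (hd t) \<and> Fn (last t)" by (simp add: g.MM_def)
    also have "\<dots> \<longleftrightarrow> t \<noteq> [] \<and> (\<forall>x\<in>set t. A x) \<and> successively F t \<and> S (hd t) \<and> Fn (last t)"
      by (simp add: g.ch_def)
    also have "\<dots> \<longleftrightarrow> t \<in> matches ety tm I P"
      unfolding matches_char lang_eq[OF dist] good_def loc_def A_def F_def S_def Fn_def
      by (cases t) (auto simp: succ_conj successively_map last_map)
    finally show "t \<in> matches ety tm I P \<longleftrightarrow> t \<in> g.MM" by blast
  qed
  have Veq: "greta_V ety tm I P = g.VV" unfolding greta_V_def g.VV_def MMeq ..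
  have Eeq: "greta_E ety tm I P = g.EE" unfolding greta_E_def g.EE_def MMeq ..
  have preq: "\<And>e. preds ety tm I P e = g.pr e" unfolding preds_def g.pr_def Veq Eeq ..
  have Eneq: "end_events ety tm I P = g.En" unfolding end_events_def Veq g.En_def by (simp add: Fn_def)
  have EnV: "\<And>e. e \<in> g.En \<Longrightarrow> e \<in> g.VV" by (simp add: g.En_def)
  have h1: "\<forall>e\<in>g.VV. cnt e = (if S e then 1 else 0) + (\<Sum>p\<in>g.pr e. cnt p)"
    using cnt_def unfolding Veq preq S_def by blast
  have hE: "\<forall>e\<in>g.VV. cntE e = (if ety e = E then cnt e else 0) + (\<Sum>p\<in>g.pr e. cntE p)"
    using recE recN unfolding Veq preq by auto
  have hs: "\<forall>e\<in>g.VV. sm e = (if ety e = E then attr e * real (cnt e) else 0) + (\<Sum>p\<in>g.pr e. sm p)"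
    using recE recN unfolding Veq preq by auto
  have hmn: "\<forall>e\<in>g.VV. mn e = Inf ((if ety e = E then {ereal (attr e)} else {}) \<union> mn ` g.pr e)"
    using recE recN unfolding Veq preq by auto
  have hmx: "\<forall>e\<in>g.VV. mx e = Sup ((if ety e = E then {ereal (attr e)} else {}) \<union> mx ` g.pr e)"
    using recE recN unfolding Veq preq by auto
  have C: "COUNT ety tm I P E = (\<Sum>e \<in> end_events ety tm I P. cntE e)"
  proof -
    have "COUNT ety tm I P E = (\<Sum>e\<in>g.En. \<Sum>w\<in>g.Pre e. length (filter (\<lambda>e. ety e = E) w))"
      unfolding COUNT_def MMeq by (rule g.sum_MM)
    also have "\<dots> = (\<Sum>e\<in>g.En. cntE e)"
      by (rule sum.cong[OF refl]) (rule g.cntE_inv[OF h1 hE EnV, symmetric])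
    finally show ?thesis unfolding Eneq .
  qed
  have SM: "SUMagg ety tm I P E attr = (\<Sum>e \<in> end_events ety tm I P. sm e)"
  proof -
    have "SUMagg ety tm I P E attr = (\<Sum>e\<in>g.En. \<Sum>w\<in>g.Pre e. \<Sum>x\<leftarrow>filter (\<lambda>e. ety e = E) w. attr x)"
      unfolding SUMagg_def MMeq by (rule g.sum_MM)
    also have "\<dots> = (\<Sum>e\<in>g.En. sm e)"
      by (rule sum.cong[OF refl]) (rule g.sm_inv[OF h1 hs EnV, symmetric])
    finally show ?thesis unfolding Eneq .
  qed
  have setq: "{ereal (attr e) | e t. t \<in> matches ety tm I P \<and> e \<in> set t \<and> ety e = E}
     = (\<Union>e\<in>g.En. {ereal (attr x) | x w. w \<in> g.Pre e \<and> x \<in> set w \<and> ety x = E})"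
    unfolding MMeq g.MM_decomp by blast
  have MN: "MINagg ety tm I P E attr = Inf (mn ` end_events ety tm I P)"
  proof -
    have "MINagg ety tm I P E attr = (INF e\<in>g.En. Inf {ereal (attr x) | x w. w \<in> g.Pre e \<and> x \<in> set w \<and> ety x = E})"
      unfolding MINagg_def setq by (rule Inf_UN_helper)
    also have "\<dots> = (INF e\<in>g.En. mn e)"
      by (rule INF_cong[OF refl]) (rule g.mn_inv[OF hmn EnV, symmetric])
    finally show ?thesis unfolding Eneq .
  qed
  have MX: "MAXagg ety tm I P E attr = Sup (mx ` end_events ety tm I P)"
  proof -
    have "MAXagg ety tm I P E attr = (SUP e\<in>g.En. Sup {ereal (attr x) | x w. w \<in> g.Pre e \<and> x \<in> set w \<and> ety x = E})"
      unfolding MAXagg_def setq by (rule Sup_UN_helper)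
    also have "\<dots> = (SUP e\<in>g.En. mx e)"
      by (rule SUP_cong[OF refl]) (rule g.mx_inv[OF hmx EnV, symmetric])
    finally show ?thesis unfolding Eneq .
  qed
  have AV: "AVGagg ety tm I P E attr =
        (\<Sum>e \<in> end_events ety tm I P. sm e) / real (\<Sum>e \<in> end_events ety tm I P. cntE e)"
    unfolding AVGagg_def C SM ..
  show ?thesis using C SM MN MX AV by blast
qed

end
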